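(* Assume (A0)–(A3) and let $\{(x^k,\lambda^k)\}$ be generated by the NEPJ-ADMM. Then for every $k\ge1$, $$\hat{\mathcal{L}}_k-\hat{\mathcal{L}}_{k-1}\le\sum_{i=1}^{p-1}\Big(\frac{(p-2+\alpha)\beta\|A_i\|^2}{2}-\frac{m_i}{4}\Big)\|\Delta x_i^k\|^2+\Theta_\lambda^k+\Theta_p^k,$$ where $\Theta_\lambda^k:=\frac{1}{\beta\theta}\|\Delta\lambda^k\|^2+\frac{c_1}{2}\big(\|A_p^*\Delta\lambda^k\|^2-\|A_p^*\Delta\lambda^{k-1}\|^2\big)$ and $\Theta_p^k:=\Big(\frac{(p-1)\beta\|A_p\|^2}{2\alpha}-\frac{m_p}{4}\Big)\big(\|\Delta x_p^k\|^2+\|\Delta x_p^{k-1}\|^2\big)$.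
   Context: Problem: let $p\ge2$, $f_i:\mathbb{R}^{n_i}\to(-\infty,\infty]$ ($i=1,\dots,p$), $A_i\in\mathbb{R}^{d\times n_i}$, $b\in\mathbb{R}^d$, and consider $\min\{\sum_{i=1}^pf_i(x_i):\sum_{i=1}^pA_ix_i=b\}$. For $\beta>0$ the augmented Lagrangian is $\mathcal{L}_\beta(x_1,\dots,x_p,\lambda)=\sum_{i=1}^pf_i(x_i)-\langle\lambda,\sum_{i=1}^pA_ix_i-b\rangle+\frac\beta2\|\sum_{i=1}^pA_ix_i-b\|^2$. Standing assumptions: (A0) $f_1,\dots,f_{p-1}$ are proper lower semicontinuous; (A1) $A_p\ne0$ and $\mathrm{Im}(A_p)\supseteq\{b\}\cup\mathrm{Im}(A_1)\cup\dots\cup\mathrm{Im}(A_{p-1})$; (A2) $f_p:\mathbb{R}^{n_p}\to\mathbb{R}$ is differentiable with $L_p$-Lipschitz gradient; (A3) there is $\bar\beta\ge0$ with $v(\bar\beta)>-\infty$, where $v(\beta):=\inf_{x}\{\sum_{i=1}^pf_i(x_i)+\frac\beta2\|\sum_{i=1}^pA_ix_i-b\|^2\}$. $A^*$ is the transpose; $\sigma^+_{A_p}$ is the smallest positive eigenvalue of $A_p^*A_p$. Distance generating functions: for $Z\subseteq\mathbb{R}^s$ and $0<m\le M$, $\mathcal{D}_Z(m,M)$ is the class of real-valued functions $w$ differentiable on $Z$ with $w(z')-w(z)-\langle\nabla w(z),z'-z\rangle\ge\frac m2\|z'-z\|^2$ and $\|\nabla w(z)-\nabla w(z')\|\le M\|z-z'\|$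 for all $z,z'\in Z$; its Bregman distance is $(dw)_z(z'):=w(z')-w(z)-\langle\nabla w(z),z'-z\rangle$ for $z\in Z$, $z'\in\mathbb{R}^s$. NEPJ-ADMM: let $Z_i=\mathrm{dom} f_i$, $\gamma_\theta:=\theta/(1-|\theta-1|)^2$. Pick $(x_1^0,\dots,x_p^0,\lambda^0)\in Z_1\times\dots\times Z_p\times\mathbb{R}^d$, $\alpha>0$, $\beta\ge\bar\beta$ with $\beta>0$, $M_i\ge m_i>0$, $\theta\in(0,2)$ such that $\delta_i:=\frac{m_i}{4}-\big(\frac{p-2+\alpha}{2}+\frac{2\gamma_\theta(p+1)}{\sigma^+_{A_p}}\|A_p^*\|^2\big)\beta\max_{1\le l\le p-1}\|A_l\|^2>0$ for $i=1,\dots,p-1$ and $\delta_p:=\frac{m_p}{4}-\big(\frac{\beta(p-1)\|A_p\|^2}{2\alpha}+\frac{\gamma_\theta(p+1)(L_p^2+2M_p^2)}{\beta\sigma^+_{A_p}}\big)>0$. For $k\ge1$: for each $i$ choose $w_i^k\in\mathcal{D}_{Z_i}(m_i,M_i)$ and let $x_i^k$ be an optimal solution (assumed to exist) of $\min_{x_i}\{\mathcal{L}_\beta(x^{k-1}_{<i},x_i,x^{k-1}_{>i},\lambda^{k-1})+(dw_i^k)_{x_i^{k-1}}(x_i)\}$, where $(x_{<i},x_i,x_{>i})$ denotes $(x_1,\dots,x_p)$ with the $i$-th block singled out; then set $\lambda^k=\lambda^{k-1}-\theta\beta(\sum_{i=1}^pA_ix_i^k-b)$. Write $x^k=(x_1^k,\dots,x_p^k)$.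 Notation: $\Delta x_i^k:=x_i^k-x_i^{k-1}$, $\Delta\lambda^k:=\lambda^k-\lambda^{k-1}$ for $k\ge1$; $R_p^0:=A_p^*\lambda^0-\nabla f_p(x_p^0)$; conventions $\Delta\lambda^0:=0$, $\Delta x_i^0:=0$ for $i=1,\dots,p-1$, $\Delta x_p^0:=R_p^0/M_p$. Let $c_1:=\frac{2|\theta-1|}{\beta\theta(1-|\theta-1|)\sigma^+_{A_p}}$, $\eta_0:=\frac{m_p}{4M_p^2}\|A_p^*\lambda^0-\nabla f_p(x_p^0)\|^2$, $\eta_k:=\sum_{i=1}^p\frac{m_i}{4}\|\Delta x_i^k\|^2+\frac{c_1}{2}\|A_p^*\Delta\lambda^k\|^2$ for $k\ge1$, and $\hat{\mathcal{L}}_k:=\mathcal{L}_\beta(x^k,\lambda^k)+\eta_k$ for $k\ge0$. *)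

theory Defs
  imports Jordan_Normal_Form.Char_Poly "HOL-Library.Extended_Real"
begin

text \<open>Vectors of R^n are JNF vectors in carrier_vec n; matrices R^(d x n) are in carrier_mat d n.\<close>

definition vnorm :: "real vec \<Rightarrow> real" where
  "vnorm v = sqrt (scalar_prod v v)"

definition opnorm :: "real mat \<Rightarrow> real" where
  "opnorm A = Sup {vnorm (A *\<^sub>v v) | v. v \<in> carrier_vec (dim_col A) \<and> vnorm v \<le> 1}"

definition img :: "real mat \<Rightarrow> real vec set" where
  "img A = (\<lambda>v. A *\<^sub>v v) ` carrier_vec (dim_col A)"

definition sigma_pos :: "real mat \<Rightarrow> real" where
  "sigma_pos A = Min {s. eigenvalue (transpose_mat A * A) s \<and> s > 0}"

definition has_grad :: "nat \<Rightarrow> (real vec \<Rightarrow> real) \<Rightarrow> (real vec \<Rightarrow> real vec) \<Rightarrow> real vec \<Rightarrow> bool" where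
  "has_grad n f g x \<longleftrightarrow> g x \<in> carrier_vec n \<and>
     (\<forall>e>0. \<exists>\<delta>>0. \<forall>y\<in>carrier_vec n. vnorm (y - x) < \<delta> \<longrightarrow>
        \<bar>f y - f x - scalar_prod (g x) (y - x)\<bar> \<le> e * vnorm (y - x))"

definition proper_on :: "nat \<Rightarrow> (real vec \<Rightarrow> ereal) \<Rightarrow> bool" where
  "proper_on n f \<longleftrightarrow> (\<forall>x\<in>carrier_vec n. f x \<noteq> -\<infinity>) \<and> (\<exists>x\<in>carrier_vec n. f x \<noteq> \<infinity>)"

definition lsc_on :: "nat \<Rightarrow> (real vec \<Rightarrow> ereal) \<Rightarrow> bool" where
  "lsc_on n f \<longleftrightarrow> (\<forall>x\<in>carrier_vec n. \<forall>t. t < f x \<longrightarrow>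
      (\<exists>\<delta>>0. \<forall>y\<in>carrier_vec n. vnorm (y - x) < \<delta> \<longrightarrow> t < f y))"

definition edom :: "nat \<Rightarrow> (real vec \<Rightarrow> ereal) \<Rightarrow> real vec set" where
  "edom n f = {x \<in> carrier_vec n. f x < \<infinity>}"

definition dgf :: "nat \<Rightarrow> real vec set \<Rightarrow> real \<Rightarrow> real \<Rightarrow> (real vec \<Rightarrow> real) \<Rightarrow> (real vec \<Rightarrow> real vec) \<Rightarrow> bool" where
  "dgf n Z m M w gw \<longleftrightarrow> (\<forall>z\<in>Z. has_grad n w gw z) \<and>
     (\<forall>z\<in>Z. \<forall>z'\<in>Z. w z' - w z - scalar_prod (gw z) (z' - z) \<ge> m / 2 * (vnorm (z' - z))\<^sup>2) \<and>
     (\<forall>z\<in>Z. \<forall>z'\<in>Z. vnorm (gw z - gw z') \<le> M * vnorm (z - z'))"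

definition breg :: "(real vec \<Rightarrow> real) \<Rightarrow> (real vec \<Rightarrow> real vec) \<Rightarrow> real vec \<Rightarrow> real vec \<Rightarrow> real" where
  "breg w gw z z' = w z' - w z - scalar_prod (gw z) (z' - z)"

definition resid :: "nat \<Rightarrow> nat \<Rightarrow> (nat \<Rightarrow> real mat) \<Rightarrow> real vec \<Rightarrow> (nat \<Rightarrow> real vec) \<Rightarrow> real vec" where
  "resid d p A b x = vec d (\<lambda>j. (\<Sum>i=1..p. (A i *\<^sub>v x i) $ j)) - b"

definition augL :: "nat \<Rightarrow> nat \<Rightarrow> (nat \<Rightarrow> real vec \<Rightarrow> ereal) \<Rightarrow> (nat \<Rightarrow> real mat) \<Rightarrow> real vec \<Rightarrow> real
     \<Rightarrow> (nat \<Rightarrow> real vec) \<Rightarrow> real vec \<Rightarrow> ereal" where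
  "augL d p f A b \<beta> x lam = (\<Sum>i=1..p. f i (x i))
     + ereal (- scalar_prod lam (resid d p A b x) + \<beta> / 2 * (vnorm (resid d p A b x))\<^sup>2)"

definition vval :: "nat \<Rightarrow> nat \<Rightarrow> (nat \<Rightarrow> nat) \<Rightarrow> (nat \<Rightarrow> real vec \<Rightarrow> ereal) \<Rightarrow> (nat \<Rightarrow> real mat) \<Rightarrow> real vec
     \<Rightarrow> real \<Rightarrow> ereal" where
  "vval d p n f A b \<beta> = (INF x\<in>{x. \<forall>i\<in>{1..p}. x i \<in> carrier_vec (n i)}.
      (\<Sum>i=1..p. f i (x i)) + ereal (\<beta> / 2 * (vnorm (resid d p A b x))\<^sup>2))"

definition gamma_th :: "real \<Rightarrow> real" where
  "gamma_th \<theta> = \<theta> / (1 - \<bar>\<theta> - 1\<bar>)\<^sup>2"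

end

theory Submission
  imports Defs
begin


lemma my_CS:
  fixes a b :: "'a \<Rightarrow> real"
  shows "(\<Sum>i\<in>I. a i * b i)\<^sup>2 \<le> (\<Sum>i\<in>I. (a i)\<^sup>2) * (\<Sum>i\<in>I. (b i)\<^sup>2)"
proof (cases "(\<Sum>i\<in>I. (b i)\<^sup>2) > 0")
  case False
  then consider "\<And>i. i\<in>I \<Longrightarrow> b i = 0" | "infinite I"
    by (metis (mono_tags, lifting) sum_pos2 zero_le_power2 zero_less_power2)
  thus ?thesis
    by fastforce
next
  case True
  define r where "r \<equiv> (\<Sum>i\<in>I. a i * b i) / (\<Sum>i\<in>I. (b i)\<^sup>2)"
  have "0 \<le> (\<Sum>i\<in>I. (a i - r * b i)\<^sup>2)"
    by (simp add: sum_nonneg)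
  also have "... = (\<Sum>i\<in>I. (a i)\<^sup>2) - 2 * r * (\<Sum>i\<in>I. a i * b i) + r\<^sup>2 * (\<Sum>i\<in>I. (b i)\<^sup>2)"
    by (simp add: algebra_simps power2_eq_square sum_distrib_left flip: sum.distrib)
  also have "\<dots> = (\<Sum>i\<in>I. (a i)\<^sup>2) - ((\<Sum>i\<in>I. a i * b i))\<^sup>2 / (\<Sum>i\<in>I. (b i)\<^sup>2)"
    by (simp add: r_def power2_eq_square)
  finally have "((\<Sum>i\<in>I. a i * b i))\<^sup>2 / (\<Sum>i\<in>I. (b i)\<^sup>2) \<le> (\<Sum>i\<in>I. (a i)\<^sup>2)"
    by (simp add: le_diff_eq)
  thus ?thesis
    by (simp add: pos_divide_le_eq True)
qed

lemma my_sumsq: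
  fixes f :: "'a \<Rightarrow> real"
  shows "(\<Sum>i\<in>I. f i)\<^sup>2 \<le> real (card I) * (\<Sum>i\<in>I. (f i)\<^sup>2)"
  using my_CS[of "\<lambda>_. 1" f I] by simp

lemma sprod_self: "(v::real vec) \<bullet> v = (\<Sum>j<dim_vec v. (v$j)\<^sup>2)"
  unfolding scalar_prod_def atLeast0LessThan power2_eq_square by simp

lemma vnorm_sq: assumes "v \<in> carrier_vec d" shows "(vnorm v)\<^sup>2 = (\<Sum>j<d. (v$j)\<^sup>2)"
proof -
  have "v \<bullet> v = (\<Sum>j<d. (v$j)\<^sup>2)" using assms sprod_self[of v] by simp
  moreover have "0 \<le> (\<Sum>j<d. (v$j)\<^sup>2)" by (simp add: sum_nonneg)
  ultimately show ?thesis by (simp add: vnorm_def)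
qed

lemma vnorm_nonneg: "vnorm v \<ge> 0"
  unfolding vnorm_def sprod_self by (simp add: sum_nonneg)

lemma vnorm_smult: assumes "v \<in> carrier_vec d" shows "vnorm (a \<cdot>\<^sub>v v) = \<bar>a\<bar> * vnorm v"
proof -
  have "(a \<cdot>\<^sub>v v) \<bullet> (a \<cdot>\<^sub>v v) = a\<^sup>2 * (v \<bullet> v)" using assms by (simp add: power2_eq_square)
  thus ?thesis unfolding vnorm_def by (simp add: real_sqrt_mult)
qed

lemma resid_carrier: "b \<in> carrier_vec d \<Longrightarrow> resid d p A b x \<in> carrier_vec d"
  unfolding resid_def carrier_vec_def by simp

lemma resid_comp: "b \<in> carrier_vec d \<Longrightarrow> j < d \<Longrightarrow>
   resid d p A b x $ j = (\<Sum>i=1..p. (A i *\<^sub>v x i) $ j) - b $ j"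
  unfolding resid_def carrier_vec_def by simp

lemma matvec_comp: assumes A: "A \<in> carrier_mat d nn" and v: "v \<in> carrier_vec nn" and j: "j < d"
  shows "(A *\<^sub>v v) $ j = (\<Sum>k<nn. A $$ (j,k) * v $ k)"
proof -
  have "(A *\<^sub>v v) $ j = row A j \<bullet> v" using A j by simp
  also have "\<dots> = (\<Sum>k<nn. row A j $ k * v $ k)" unfolding scalar_prod_def using v
    by (simp add: atLeast0LessThan)
  also have "\<dots> = (\<Sum>k<nn. A $$ (j,k) * v $ k)" using A j by (intro sum.cong) auto
  finally show ?thesis .
qed

lemma matvec_carrier: "A \<in> carrier_mat d nn \<Longrightarrow> A *\<^sub>v v \<in> carrier_vec d"
  unfolding carrier_vec_def carrier_mat_def by simp

lemma opnorm_bdd: assumes A: "A \<in> carrier_mat d nn"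
  shows "bdd_above {vnorm (A *\<^sub>v v) | v. v \<in> carrier_vec (dim_col A) \<and> vnorm v \<le> 1}"
proof -
  let ?C = "(\<Sum>j<d. \<Sum>k<nn. (A $$ (j,k))\<^sup>2)"
  have "vnorm (A *\<^sub>v v) \<le> sqrt ?C" if v: "v \<in> carrier_vec nn" "vnorm v \<le> 1" for v
  proof -
    have vv: "(\<Sum>k<nn. (v$k)\<^sup>2) \<le> 1"
    proof -
      have "(vnorm v)\<^sup>2 \<le> 1" using v(2) vnorm_nonneg[of v] by (simp add: power_le_one)
      thus ?thesis using vnorm_sq[OF v(1)] by simp
    qed
    have "(vnorm (A *\<^sub>v v))\<^sup>2 = (\<Sum>j<d. (\<Sum>k<nn. A $$ (j,k) * v $ k)\<^sup>2)"
      using vnorm_sq[OF matvec_carrier[OF A]] matvec_comp[OF A v(1)]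
      by (simp del: index_mult_mat_vec)
    also have "\<dots> \<le> (\<Sum>j<d. (\<Sum>k<nn. (A $$ (j,k))\<^sup>2))"
    proof (rule sum_mono)
      fix j assume "j \<in> {..<d}"
      have "(\<Sum>k<nn. A $$ (j,k) * v $ k)\<^sup>2 \<le> (\<Sum>k<nn. (A $$ (j,k))\<^sup>2) * (\<Sum>k<nn. (v$k)\<^sup>2)"
        by (rule my_CS)
      also have "\<dots> \<le> (\<Sum>k<nn. (A $$ (j,k))\<^sup>2)"
        using vv by (simp add: mult_left_le sum_nonneg)
      finally show "(\<Sum>k<nn. A $$ (j,k) * v $ k)\<^sup>2 \<le> (\<Sum>k<nn. (A $$ (j,k))\<^sup>2)" .
    qed
    finally show ?thesis using vnorm_nonneg by (simp add: real_le_rsqrt)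
  qed
  hence "\<forall>y\<in>{vnorm (A *\<^sub>v v) | v. v \<in> carrier_vec (dim_col A) \<and> vnorm v \<le> 1}. y \<le> sqrt ?C"
    using A by auto
  thus ?thesis unfolding bdd_above_def by blast
qed

lemma opnorm_bound: assumes A: "A \<in> carrier_mat d nn" and v: "v \<in> carrier_vec nn"
  shows "vnorm (A *\<^sub>v v) \<le> opnorm A * vnorm v"
proof (cases "vnorm v = 0")
  case True
  hence "(\<Sum>k<nn. (v$k)\<^sup>2) = 0" using vnorm_sq[OF v] by simp
  hence "\<forall>k<nn. v$k = 0" by (simp add: sum_nonneg_eq_0_iff)
  hence z: "(A *\<^sub>v v) $ j = 0" if "j < d" for j using matvec_comp[OF A v that] by simp
  have "(vnorm (A *\<^sub>v v))\<^sup>2 = 0" using vnorm_sq[OF matvec_carrier[OF A]] z by simp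
  thus ?thesis using True by simp
next
  case False
  hence pos: "vnorm v > 0" using vnorm_nonneg[of v] by simp
  define w where "w = (1 / vnorm v) \<cdot>\<^sub>v v"
  have wc: "w \<in> carrier_vec nn" using v by (simp add: w_def)
  have wn: "vnorm w = 1" using pos v by (simp add: w_def vnorm_smult)
  have "A *\<^sub>v w = (1 / vnorm v) \<cdot>\<^sub>v (A *\<^sub>v v)" using A v by (simp add: w_def mult_mat_vec)
  hence "vnorm (A *\<^sub>v w) = vnorm (A *\<^sub>v v) / vnorm v" using A v pos
    by (simp add: vnorm_smult[of _ d])
  moreover have "vnorm (A *\<^sub>v w) \<le> opnorm A" unfolding opnorm_def
  proof (rule cSup_upper[OF _ opnorm_bdd[OF A]])
    show "vnorm (A *\<^sub>v w) \<in> {vnorm (A *\<^sub>v v) |v. v \<in> carrier_vec (dim_col A) \<and> vnorm v \<le> 1}"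
      unfolding mem_Collect_eq by (rule exI[of _ w]) (use wc wn A in auto)
  qed
  ultimately show ?thesis using pos by (simp add: divide_le_eq mult.commute)
qed

lemma opnorm_bound_sq: assumes A: "A \<in> carrier_mat d nn" and v: "v \<in> carrier_vec nn"
  shows "(\<Sum>j<d. ((A *\<^sub>v v) $ j)\<^sup>2) \<le> (opnorm A)\<^sup>2 * (vnorm v)\<^sup>2"
proof -
  have "vnorm (A *\<^sub>v v) \<le> opnorm A * vnorm v" by (rule opnorm_bound[OF A v])
  hence "(vnorm (A *\<^sub>v v))\<^sup>2 \<le> (opnorm A * vnorm v)\<^sup>2"
    using vnorm_nonneg by (simp add: power_mono)
  thus ?thesis using vnorm_sq[OF matvec_carrier[OF A]] by (simp add: power_mult_distrib)
qed


lemma two_mul_le: fixes x y a :: real assumes "a > 0" shows "2 * x * y \<le> a * x\<^sup>2 + y\<^sup>2 / a"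
proof -
  have "0 \<le> (a * x - y)\<^sup>2" by simp
  hence "0 \<le> a * (a * x\<^sup>2 + y\<^sup>2 / a - 2 * x * y)" using assms
    by (simp add: power2_eq_square algebra_simps)
  thus ?thesis using assms by (simp add: zero_le_mult_iff)
qed

lemma cross_bound: fixes a :: "nat \<Rightarrow> real" and \<alpha> :: real
  assumes p2: "p \<ge> 2" and al: "\<alpha> > 0"
  shows "(\<Sum>i=1..p. a i)\<^sup>2 - (\<Sum>i=1..p. (a i)\<^sup>2)
     \<le> (real p - 2 + \<alpha>) * (\<Sum>i=1..<p. (a i)\<^sup>2) + (real p - 1) / \<alpha> * (a p)\<^sup>2"
proof -
  have ins: "{1..p} = insert p {1..<p}" using p2 by auto
  define V where "V = (\<Sum>i=1..<p. a i)"
  define Q where "Q = (\<Sum>i=1..<p. (a i)\<^sup>2)"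
  have e1: "(\<Sum>i=1..p. a i) = a p + V" unfolding V_def ins by simp
  have e2: "(\<Sum>i=1..p. (a i)\<^sup>2) = (a p)\<^sup>2 + Q" unfolding Q_def ins by simp
  have c: "real (card {1..<p}) = real p - 1" using p2 by simp
  have v2: "V\<^sup>2 \<le> (real p - 1) * Q" unfolding V_def Q_def using my_sumsq[of a "{1..<p}"] c by simp
  have "2 * V * a p = (\<Sum>i=1..<p. 2 * a i * a p)" unfolding V_def by (simp add: sum_distrib_left sum_distrib_right)
  also have "\<dots> \<le> (\<Sum>i=1..<p. \<alpha> * (a i)\<^sup>2 + (a p)\<^sup>2 / \<alpha>)"
    by (rule sum_mono) (rule two_mul_le[OF al])
  also have "\<dots> = \<alpha> * Q + (real p - 1) * (a p)\<^sup>2 / \<alpha>"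
    unfolding Q_def using c by (simp add: sum.distrib sum_distrib_left)
  finally have v3: "2 * V * a p \<le> \<alpha> * Q + (real p - 1) * (a p)\<^sup>2 / \<alpha>" .
  have "(\<Sum>i=1..p. a i)\<^sup>2 - (\<Sum>i=1..p. (a i)\<^sup>2) = V\<^sup>2 + 2 * V * a p - Q"
    unfolding e1 e2 by (simp add: power2_eq_square algebra_simps)
  also have "\<dots> \<le> (real p - 1) * Q + (\<alpha> * Q + (real p - 1) * (a p)\<^sup>2 / \<alpha>) - Q"
    using v2 v3 by linarith
  also have "\<dots> = (real p - 2 + \<alpha>) * Q + (real p - 1) / \<alpha> * (a p)\<^sup>2"
    by (simp add: algebra_simps)
  finally show ?thesis unfolding Q_def .
qed

lemma core:
  fixes F F' D N mm r l :: "nat \<Rightarrow> real" and u :: "nat \<Rightarrow> nat \<Rightarrow> real"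
  assumes p2: "p \<ge> 2" and al: "\<alpha> > 0" and be: "\<beta> > 0"
    and blk: "\<forall>i\<in>{1..p}. F' i - F i + (\<Sum>j<d. - l j * u i j + \<beta> / 2 * ((r j + u i j)\<^sup>2 - (r j)\<^sup>2)) + mm i / 2 * D i \<le> 0"
    and nrm: "\<forall>i\<in>{1..p}. (\<Sum>j<d. (u i j)\<^sup>2) \<le> N i * D i"
  shows "(\<Sum>i=1..p. F' i) - (\<Sum>i=1..p. F i)
      + (\<Sum>j<d. - l j * (\<Sum>i=1..p. u i j) + \<beta> / 2 * ((r j + (\<Sum>i=1..p. u i j))\<^sup>2 - (r j)\<^sup>2))
    \<le> - (\<Sum>i=1..p. mm i / 2 * D i) + (\<Sum>i=1..<p. (real p - 2 + \<alpha>) * \<beta> * N i / 2 * D i)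
      + (real p - 1) * \<beta> * N p / (2 * \<alpha>) * D p"
proof -
  define T where "T i = (\<Sum>j<d. - l j * u i j + \<beta> / 2 * ((r j + u i j)\<^sup>2 - (r j)\<^sup>2))" for i
  have "(\<Sum>i=1..p. F' i - F i + T i + mm i / 2 * D i) \<le> 0"
    using blk unfolding T_def by (intro sum_nonpos) auto
  hence s1: "(\<Sum>i=1..p. F' i) - (\<Sum>i=1..p. F i) + (\<Sum>i=1..p. T i) + (\<Sum>i=1..p. mm i / 2 * D i) \<le> 0"
    by (simp add: sum.distrib sum_subtractf)
  have Texp: "(\<Sum>i=1..p. T i) = (\<Sum>j<d. \<Sum>i=1..p. - l j * u i j + \<beta> * r j * u i j + \<beta> / 2 * (u i j)\<^sup>2)"
    unfolding T_def by (subst sum.swap) (simp add: power2_eq_square algebra_simps)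
  have Xexp: "(\<Sum>j<d. - l j * (\<Sum>i=1..p. u i j) + \<beta> / 2 * ((r j + (\<Sum>i=1..p. u i j))\<^sup>2 - (r j)\<^sup>2))
      = (\<Sum>j<d. (\<Sum>i=1..p. - l j * u i j + \<beta> * r j * u i j) + \<beta> / 2 * (\<Sum>i=1..p. u i j)\<^sup>2)"
    by (intro sum.cong refl) (simp add: power2_eq_square algebra_simps sum_distrib_left sum.distrib sum_subtractf sum_negf)
  have diff: "(\<Sum>j<d. - l j * (\<Sum>i=1..p. u i j) + \<beta> / 2 * ((r j + (\<Sum>i=1..p. u i j))\<^sup>2 - (r j)\<^sup>2))
      - (\<Sum>i=1..p. T i) = \<beta> / 2 * (\<Sum>j<d. (\<Sum>i=1..p. u i j)\<^sup>2 - (\<Sum>i=1..p. (u i j)\<^sup>2))"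
  proof -
    have "(\<Sum>j<d. (\<Sum>i=1..p. - l j * u i j + \<beta> * r j * u i j) + \<beta> / 2 * (\<Sum>i=1..p. u i j)\<^sup>2)
      - (\<Sum>j<d. \<Sum>i=1..p. - l j * u i j + \<beta> * r j * u i j + \<beta> / 2 * (u i j)\<^sup>2)
      = (\<Sum>j<d. \<beta> / 2 * ((\<Sum>i=1..p. u i j)\<^sup>2 - (\<Sum>i=1..p. (u i j)\<^sup>2)))"
      unfolding sum_subtractf[symmetric]
      by (intro sum.cong refl) (simp add: sum.distrib right_diff_distrib sum_distrib_left)
    thus ?thesis unfolding Xexp Texp by (simp add: sum_distrib_left)
  qed
  have "(\<Sum>j<d. (\<Sum>i=1..p. u i j)\<^sup>2 - (\<Sum>i=1..p. (u i j)\<^sup>2))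
       \<le> (\<Sum>j<d. (real p - 2 + \<alpha>) * (\<Sum>i=1..<p. (u i j)\<^sup>2) + (real p - 1) / \<alpha> * (u p j)\<^sup>2)"
    by (rule sum_mono) (rule cross_bound[OF p2 al])
  also have "\<dots> = (real p - 2 + \<alpha>) * (\<Sum>i=1..<p. (\<Sum>j<d. (u i j)\<^sup>2)) + (real p - 1) / \<alpha> * (\<Sum>j<d. (u p j)\<^sup>2)"
    by (simp add: sum.distrib sum_distrib_left sum.swap[of _ "{..<d}"])
  also have "\<dots> \<le> (real p - 2 + \<alpha>) * (\<Sum>i=1..<p. N i * D i) + (real p - 1) / \<alpha> * (N p * D p)"
  proof (rule add_mono)
    show "(real p - 2 + \<alpha>) * (\<Sum>i=1..<p. (\<Sum>j<d. (u i j)\<^sup>2)) \<le> (real p - 2 + \<alpha>) * (\<Sum>i=1..<p. N i * D i)"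
      using p2 al nrm by (intro mult_left_mono sum_mono) auto
    show "(real p - 1) / \<alpha> * (\<Sum>j<d. (u p j)\<^sup>2) \<le> (real p - 1) / \<alpha> * (N p * D p)"
      using p2 al nrm by (intro mult_left_mono) auto
  qed
  finally have cb: "(\<Sum>j<d. (\<Sum>i=1..p. u i j)\<^sup>2 - (\<Sum>i=1..p. (u i j)\<^sup>2))
       \<le> (real p - 2 + \<alpha>) * (\<Sum>i=1..<p. N i * D i) + (real p - 1) / \<alpha> * (N p * D p)" .
  have "\<beta> / 2 * (\<Sum>j<d. (\<Sum>i=1..p. u i j)\<^sup>2 - (\<Sum>i=1..p. (u i j)\<^sup>2))
       \<le> \<beta> / 2 * ((real p - 2 + \<alpha>) * (\<Sum>i=1..<p. N i * D i) + (real p - 1) / \<alpha> * (N p * D p))"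
    using cb be by (intro mult_left_mono) auto
  also have "\<dots> = (\<Sum>i=1..<p. (real p - 2 + \<alpha>) * \<beta> * N i / 2 * D i) + (real p - 1) * \<beta> * N p / (2 * \<alpha>) * D p"
  proof -
    have e1: "\<beta> / 2 * ((real p - 2 + \<alpha>) * (\<Sum>i=1..<p. N i * D i)) = (\<Sum>i=1..<p. (real p - 2 + \<alpha>) * \<beta> * N i / 2 * D i)"
      unfolding sum_distrib_left by (intro sum.cong refl) (simp add: field_simps)
    have e2: "\<beta> / 2 * ((real p - 1) / \<alpha> * (N p * D p)) = (real p - 1) * \<beta> * N p / (2 * \<alpha>) * D p"
      using al by (simp add: field_simps)
    show ?thesis by (simp only: distrib_left e1 e2)
  qed
  finally show ?thesis using s1 diff by linarith
qed



lemma sprod_comp: "w \<in> carrier_vec d \<Longrightarrow> v \<bullet> w = (\<Sum>j<d. v$j * w$j)"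
  by (simp add: scalar_prod_def atLeast0LessThan)

lemma breg_zero: "breg w gw z z = 0"
proof -
  have "(\<Sum>i\<in>{0..<dim_vec (z - z)}. gw z $ i * (z - z) $ i) = 0"
    by (intro sum.neutral) auto
  thus ?thesis unfolding breg_def scalar_prod_def by simp
qed

lemma mv_minus: assumes A: "(A :: real mat) \<in> carrier_mat d nn" and y: "y \<in> carrier_vec nn" and z: "z \<in> carrier_vec nn"
  and j: "j < d"
  shows "(A *\<^sub>v y) $ j = (A *\<^sub>v z) $ j + (A *\<^sub>v (y - z)) $ j"
proof -
  have "A *\<^sub>v (y - z) = A *\<^sub>v y - A *\<^sub>v z" by (rule mult_minus_distrib_mat_vec[OF A y z])
  hence "(A *\<^sub>v (y - z)) $ j = (A *\<^sub>v y) $ j - (A *\<^sub>v z) $ j" using A j by simp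
  thus ?thesis by simp
qed

lemma sum_upd: assumes "finite S" "i \<in> S" shows "sum (F(i := v)) S = sum F S - F i + (v::real)"
proof -
  have "sum (F(i := v)) S = v + sum (F(i := v)) (S - {i})" using sum.remove[OF assms, of "F(i := v)"] by simp
  also have "sum (F(i := v)) (S - {i}) = sum F (S - {i})" by (intro sum.cong) auto
  also have "sum F (S - {i}) = sum F S - F i" using sum.remove[OF assms, of F] by simp
  finally show ?thesis by simp
qed

lemma augL_fin: assumes "\<forall>i\<in>{1..p}. f i (x i) = ereal (G i)"
  shows "augL d p f A b \<beta> x lam = ereal ((\<Sum>i=1..p. G i) + (- (lam \<bullet> resid d p A b x) + \<beta> / 2 * (vnorm (resid d p A b x))\<^sup>2))"
proof -
  have "(\<Sum>i=1..p. f i (x i)) = (\<Sum>i=1..p. ereal (G i))" using assms by (intro sum.cong) auto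
  thus ?thesis unfolding augL_def by (simp add: sum_ereal)
qed

lemma vnorm_zero_mv: assumes "B \<in> carrier_mat nn d" shows "vnorm (B *\<^sub>v 0\<^sub>v d) = 0"
proof -
  have "vnorm (0\<^sub>v d) = 0" unfolding vnorm_def sprod_self by simp
  hence "vnorm (B *\<^sub>v 0\<^sub>v d) \<le> 0" using opnorm_bound[OF assms, of "0\<^sub>v d"] by simp
  thus ?thesis using vnorm_nonneg[of "B *\<^sub>v 0\<^sub>v d"] by simp
qed

theorem mainTheorem5:
  fixes p d :: nat and n :: "nat \<Rightarrow> nat"
    and f :: "nat \<Rightarrow> real vec \<Rightarrow> ereal" and gfp :: "real vec \<Rightarrow> real vec"
    and A :: "nat \<Rightarrow> real mat" and b :: "real vec"
    and Lp \<alpha> \<beta> \<beta>bar \<theta> :: real and m M :: "nat \<Rightarrow> real"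
    and w :: "nat \<Rightarrow> nat \<Rightarrow> real vec \<Rightarrow> real" and gw :: "nat \<Rightarrow> nat \<Rightarrow> real vec \<Rightarrow> real vec"
    and x :: "nat \<Rightarrow> nat \<Rightarrow> real vec" and lam :: "nat \<Rightarrow> real vec"
    and k :: nat
  assumes p2: "p \<ge> 2"
    and A_dim: "\<forall>i\<in>{1..p}. A i \<in> carrier_mat d (n i)"
    and b_dim: "b \<in> carrier_vec d"
    \<comment> \<open>(A0)\<close>
    and A0: "\<forall>i\<in>{1..<p}. proper_on (n i) (f i) \<and> lsc_on (n i) (f i)"
    \<comment> \<open>(A1)\<close>
    and A1_nz: "A p \<noteq> 0\<^sub>m d (n p)"
    and A1_img: "b \<in> img (A p)" "\<forall>i\<in>{1..<p}. img (A i) \<subseteq> img (A p)"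
    \<comment> \<open>(A2): f_p real-valued, differentiable, L_p-Lipschitz gradient gfp\<close>
    and A2_fin: "\<forall>y\<in>carrier_vec (n p). \<bar>f p y\<bar> \<noteq> \<infinity>"
    and A2_grad: "\<forall>y\<in>carrier_vec (n p). has_grad (n p) (\<lambda>z. real_of_ereal (f p z)) gfp y"
    and A2_lip: "\<forall>y\<in>carrier_vec (n p). \<forall>z\<in>carrier_vec (n p). vnorm (gfp y - gfp z) \<le> Lp * vnorm (y - z)"
    \<comment> \<open>(A3)\<close>
    and A3: "\<beta>bar \<ge> 0" "vval d p n f A b \<beta>bar > -\<infinity>"
    \<comment> \<open>parameters of NEPJ-ADMM\<close>
    and alpha: "\<alpha> > 0" and beta: "\<beta> \<ge> \<beta>bar" "\<beta> > 0"
    and mM: "\<forall>i\<in>{1..p}. 0 < m i \<and> m i \<le> M i"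
    and theta: "0 < \<theta>" "\<theta> < 2"
    and delta_i: "\<forall>i\<in>{1..<p}. m i / 4 - ((real p - 2 + \<alpha>) / 2
          + 2 * gamma_th \<theta> * (real p + 1) / sigma_pos (A p) * (opnorm (transpose_mat (A p)))\<^sup>2)
          * \<beta> * Max ((\<lambda>l. (opnorm (A l))\<^sup>2) ` {1..<p}) > 0"
    and delta_p: "m p / 4 - (\<beta> * (real p - 1) * (opnorm (A p))\<^sup>2 / (2 * \<alpha>)
          + gamma_th \<theta> * (real p + 1) * (Lp\<^sup>2 + 2 * (M p)\<^sup>2) / (\<beta> * sigma_pos (A p))) > 0"
    \<comment> \<open>initial point\<close>
    and x0: "\<forall>i\<in>{1..p}. x 0 i \<in> edom (n i) (f i)"
    and lam0: "lam 0 \<in> carrier_vec d"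
    \<comment> \<open>iteration k \<ge> 1: distance generating functions, block updates, multiplier update\<close>
    and w_dgf: "\<forall>j\<ge>1. \<forall>i\<in>{1..p}. dgf (n i) (edom (n i) (f i)) (m i) (M i) (w j i) (gw j i)"
    and x_opt: "\<forall>j\<ge>1. \<forall>i\<in>{1..p}. x j i \<in> carrier_vec (n i) \<and>
          (\<forall>y\<in>carrier_vec (n i).
             augL d p f A b \<beta> ((x (j - 1))(i := x j i)) (lam (j - 1)) + ereal (breg (w j i) (gw j i) (x (j - 1) i) (x j i))
             \<le> augL d p f A b \<beta> ((x (j - 1))(i := y)) (lam (j - 1)) + ereal (breg (w j i) (gw j i) (x (j - 1) i) y))"
    and lam_upd: "\<forall>j\<ge>1. lam j = lam (j - 1) - (\<theta> * \<beta>) \<cdot>\<^sub>v resid d p A b (x j)"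
    and k1: "k \<ge> 1"
  shows
    "let c1 = 2 * \<bar>\<theta> - 1\<bar> / (\<beta> * \<theta> * (1 - \<bar>\<theta> - 1\<bar>) * sigma_pos (A p));
         dx = (\<lambda>j i. if j = 0 then (if i = p then (1 / M p) \<cdot>\<^sub>v (transpose_mat (A p) *\<^sub>v lam 0 - gfp (x 0 p))
                                   else 0\<^sub>v (n i))
                     else x j i - x (j - 1) i);
         dl = (\<lambda>j. if j = 0 then 0\<^sub>v d else lam j - lam (j - 1));
         eta = (\<lambda>j. if j = 0 then m p / (4 * (M p)\<^sup>2) * (vnorm (transpose_mat (A p) *\<^sub>v lam 0 - gfp (x 0 p)))\<^sup>2
                    else (\<Sum>i=1..p. m i / 4 * (vnorm (dx j i))\<^sup>2) + c1 / 2 * (vnorm (transpose_mat (A p) *\<^sub>v dl j))\<^sup>2);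
         Lhat = (\<lambda>j. augL d p f A b \<beta> (x j) (lam j) + ereal (eta j));
         Theta_lam = 1 / (\<beta> * \<theta>) * (vnorm (dl k))\<^sup>2
            + c1 / 2 * ((vnorm (transpose_mat (A p) *\<^sub>v dl k))\<^sup>2 - (vnorm (transpose_mat (A p) *\<^sub>v dl (k - 1)))\<^sup>2);
         Theta_p = ((real p - 1) * \<beta> * (opnorm (A p))\<^sup>2 / (2 * \<alpha>) - m p / 4)
            * ((vnorm (dx k p))\<^sup>2 + (vnorm (dx (k - 1) p))\<^sup>2)
     in Lhat k \<le> Lhat (k - 1)
          + ereal ((\<Sum>i=1..<p. ((real p - 2 + \<alpha>) * \<beta> * (opnorm (A i))\<^sup>2 / 2 - m i / 4) * (vnorm (dx k i))\<^sup>2)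
                   + Theta_lam + Theta_p)"
proof -
  obtain K where kK: "k = Suc K" using k1 by (cases k) auto
  have km: "k - 1 = K" using kK by simp
  have pin: "p \<in> {1..p}" using p2 by auto
  have ins: "{1..p} = insert p {1..<p}" using p2 by auto
  have Adim: "A i \<in> carrier_mat d (n i)" if "i \<in> {1..p}" for i using A_dim that by auto
  have lamc: "lam j \<in> carrier_vec d" for j
  proof (induction j)
    case 0 show ?case using lam0 by simp
  next
    case (Suc j)
    have "lam (Suc j) = lam j - (\<theta> * \<beta>) \<cdot>\<^sub>v resid d p A b (x (Suc j))"
      using lam_upd[rule_format, of "Suc j"] by simp
    thus ?case using Suc resid_carrier[OF b_dim] by simp
  qed
  have xopt: "x j i \<in> carrier_vec (n i) \<and>
          (\<forall>y\<in>carrier_vec (n i).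
             augL d p f A b \<beta> ((x (j - 1))(i := x j i)) (lam (j - 1)) + ereal (breg (w j i) (gw j i) (x (j - 1) i) (x j i))
             \<le> augL d p f A b \<beta> ((x (j - 1))(i := y)) (lam (j - 1)) + ereal (breg (w j i) (gw j i) (x (j - 1) i) y))"
    if "j \<ge> 1" "i \<in> {1..p}" for j i
    using x_opt that by blast
  have xc: "x j i \<in> carrier_vec (n i)" if "j \<ge> 1" "i \<in> {1..p}" for j i
    using xopt[OF that] by (rule conjunct1)
  define X where "X = x K"
  define X' where "X' = x k"
  define l where "l = lam K"
  define l' where "l' = lam k"
  have lc: "l \<in> carrier_vec d" "l' \<in> carrier_vec d" unfolding l_def l'_def using lamc by auto
  have Xc: "X i \<in> carrier_vec (n i)" if "i \<in> {1..p}" for i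
  proof (cases "K = 0")
    case True thus ?thesis using x0 that unfolding X_def edom_def by auto
  next
    case False hence "K \<ge> 1" by simp
    thus ?thesis using xc that unfolding X_def by blast
  qed
  have X'c: "X' i \<in> carrier_vec (n i)" if "i \<in> {1..p}" for i using xc that k1 unfolding X'_def by blast
  have nminf: "f i y \<noteq> -\<infinity>" if "i \<in> {1..p}" "y \<in> carrier_vec (n i)" for i y
  proof (cases "i < p")
    case True hence "i \<in> {1..<p}" using that by auto
    thus ?thesis using A0 that unfolding proper_on_def by auto
  next
    case False hence "i = p" using that by auto
    thus ?thesis using A2_fin that by auto
  qed
  define c1 where "c1 = 2 * \<bar>\<theta> - 1\<bar> / (\<beta> * \<theta> * (1 - \<bar>\<theta> - 1\<bar>) * sigma_pos (A p))"
  define dx where "dx = (\<lambda>j i. if j = 0 then (if i = p then (1 / M p) \<cdot>\<^sub>v (transpose_mat (A p) *\<^sub>v lam 0 - gfp (x 0 p))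
                                   else 0\<^sub>v (n i))
                     else x j i - x (j - 1) i)"
  define dl where "dl = (\<lambda>j. if j = 0 then 0\<^sub>v d else lam j - lam (j - 1))"
  define eta where "eta = (\<lambda>j. if j = 0 then m p / (4 * (M p)\<^sup>2) * (vnorm (transpose_mat (A p) *\<^sub>v lam 0 - gfp (x 0 p)))\<^sup>2
                    else (\<Sum>i=1..p. m i / 4 * (vnorm (dx j i))\<^sup>2) + c1 / 2 * (vnorm (transpose_mat (A p) *\<^sub>v dl j))\<^sup>2)"
  define Lhat where "Lhat = (\<lambda>j. augL d p f A b \<beta> (x j) (lam j) + ereal (eta j))"
  define Theta_lam where "Theta_lam = 1 / (\<beta> * \<theta>) * (vnorm (dl k))\<^sup>2
            + c1 / 2 * ((vnorm (transpose_mat (A p) *\<^sub>v dl k))\<^sup>2 - (vnorm (transpose_mat (A p) *\<^sub>v dl (k - 1)))\<^sup>2)"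
  define Theta_p where "Theta_p = ((real p - 1) * \<beta> * (opnorm (A p))\<^sup>2 / (2 * \<alpha>) - m p / 4)
            * ((vnorm (dx k p))\<^sup>2 + (vnorm (dx (k - 1) p))\<^sup>2)"
  define RHS where "RHS = (\<Sum>i=1..<p. ((real p - 2 + \<alpha>) * \<beta> * (opnorm (A i))\<^sup>2 / 2 - m i / 4) * (vnorm (dx k i))\<^sup>2)
                   + Theta_lam + Theta_p"
  have main: "Lhat k \<le> Lhat (k - 1) + ereal RHS"
  proof (cases "\<exists>i\<in>{1..p}. f i (X i) = \<infinity>")
    case True
    hence "(\<Sum>i=1..p. f i (X i)) = \<infinity>" by (simp add: sum_Pinfty)
    hence "Lhat (k - 1) = \<infinity>" unfolding Lhat_def augL_def km X_def by simp
    thus ?thesis by simp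
  next
    case False
    define F where "F i = real_of_ereal (f i (X i))" for i
    have fF: "f i (X i) = ereal (F i)" if "i \<in> {1..p}" for i
      using False nminf[OF that Xc[OF that]] that unfolding F_def by (cases "f i (X i)") auto
    have Xe: "X i \<in> edom (n i) (f i)" if "i \<in> {1..p}" for i
      using fF[OF that] Xc[OF that] unfolding edom_def by auto
    define r where "r = resid d p A b X"
    have rc: "r \<in> carrier_vec d" unfolding r_def by (rule resid_carrier[OF b_dim])
    define QQ where "QQ = - (l \<bullet> r) + \<beta> / 2 * (vnorm r)\<^sup>2"
    have augX: "augL d p f A b \<beta> X l = ereal (sum F {1..p} + QQ)"
      unfolding QQ_def r_def by (rule augL_fin) (use fF in auto)
    define u where "u i j = (A i *\<^sub>v (X' i - X i)) $ j" for i j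
    define D where "D i = (vnorm (X' i - X i))\<^sup>2" for i
    have blk0: "augL d p f A b \<beta> (X(i := X' i)) l + ereal (breg (w k i) (gw k i) (X i) (X' i))
        \<le> augL d p f A b \<beta> X l" if i: "i \<in> {1..p}" for i
    proof -
      have "augL d p f A b \<beta> ((x (k - 1))(i := x k i)) (lam (k - 1)) + ereal (breg (w k i) (gw k i) (x (k - 1) i) (x k i))
             \<le> augL d p f A b \<beta> ((x (k - 1))(i := x (k - 1) i)) (lam (k - 1)) + ereal (breg (w k i) (gw k i) (x (k - 1) i) (x (k - 1) i))"
      proof -
        have "\<forall>y\<in>carrier_vec (n i).
             augL d p f A b \<beta> ((x (k - 1))(i := x k i)) (lam (k - 1)) + ereal (breg (w k i) (gw k i) (x (k - 1) i) (x k i))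
             \<le> augL d p f A b \<beta> ((x (k - 1))(i := y)) (lam (k - 1)) + ereal (breg (w k i) (gw k i) (x (k - 1) i) y)"
          using xopt[OF k1 i] by (rule conjunct2)
        moreover have "x (k - 1) i \<in> carrier_vec (n i)" using Xc[OF i] unfolding km X_def .
        ultimately show ?thesis by (rule bspec)
      qed
      thus ?thesis unfolding km X_def X'_def l_def by (simp add: breg_zero)
    qed
    have fin': "f i (X' i) \<noteq> \<infinity>" if i: "i \<in> {1..p}" for i
    proof
      assume inf: "f i (X' i) = \<infinity>"
      have "(\<Sum>i'=1..p. f i' ((X(i := X' i)) i')) = \<infinity>"
        unfolding sum_Pinfty using i inf by (intro conjI bexI[of _ i]) auto
      hence "augL d p f A b \<beta> (X(i := X' i)) l = \<infinity>" unfolding augL_def by simp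
      thus False using blk0[OF i] augX by simp
    qed
    define F' where "F' i = real_of_ereal (f i (X' i))" for i
    have fF': "f i (X' i) = ereal (F' i)" if "i \<in> {1..p}" for i
      using fin'[OF that] nminf[OF that X'c[OF that]] that unfolding F'_def by (cases "f i (X' i)") auto
    have X'e: "X' i \<in> edom (n i) (f i)" if "i \<in> {1..p}" for i
      using fF'[OF that] X'c[OF that] unfolding edom_def by auto
    have breg_ge: "m i / 2 * D i \<le> breg (w k i) (gw k i) (X i) (X' i)" if i: "i \<in> {1..p}" for i
    proof -
      have "dgf (n i) (edom (n i) (f i)) (m i) (M i) (w k i) (gw k i)" using w_dgf k1 i by blast
      hence "\<forall>z\<in>edom (n i) (f i). \<forall>z'\<in>edom (n i) (f i). w k i z' - w k i z - scalar_prod (gw k i z) (z' - z) \<ge> m i / 2 * (vnorm (z' - z))\<^sup>2"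
        unfolding dgf_def by (rule conjunct1[OF conjunct2])
      hence "w k i (X' i) - w k i (X i) - scalar_prod (gw k i (X i)) (X' i - X i) \<ge> m i / 2 * (vnorm (X' i - X i))\<^sup>2"
        using Xe[OF i] X'e[OF i] by blast
      thus ?thesis unfolding breg_def D_def .
    qed
    have rcomp: "r $ j = (\<Sum>i=1..p. (A i *\<^sub>v X i) $ j) - b $ j" if "j < d" for j
      unfolding r_def using resid_comp[OF b_dim that] .
    have blk: "\<forall>i\<in>{1..p}. F' i - F i + (\<Sum>j<d. - l $ j * u i j + \<beta> / 2 * ((r $ j + u i j)\<^sup>2 - (r $ j)\<^sup>2)) + m i / 2 * D i \<le> 0"
    proof
      fix i assume i: "i \<in> {1..p}"
      define ri where "ri = resid d p A b (X(i := X' i))"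
      have ric: "ri \<in> carrier_vec d" unfolding ri_def by (rule resid_carrier[OF b_dim])
      have rij: "ri $ j = r $ j + u i j" if j: "j < d" for j
      proof -
        have "ri $ j = (\<Sum>i'=1..p. (A i' *\<^sub>v (X(i := X' i)) i') $ j) - b $ j"
          unfolding ri_def using resid_comp[OF b_dim j] .
        also have "(\<Sum>i'=1..p. (A i' *\<^sub>v (X(i := X' i)) i') $ j)
           = (\<Sum>i'=1..p. ((\<lambda>i'. (A i' *\<^sub>v X i') $ j)(i := (A i *\<^sub>v X' i) $ j)) i')"
          by (intro sum.cong) auto
        also have "\<dots> = (\<Sum>i'=1..p. (A i' *\<^sub>v X i') $ j) - (A i *\<^sub>v X i) $ j + (A i *\<^sub>v X' i) $ j"
          by (rule sum_upd) (use i in auto)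
        also have "(A i *\<^sub>v X' i) $ j = (A i *\<^sub>v X i) $ j + u i j"
          unfolding u_def by (rule mv_minus[OF Adim[OF i] X'c[OF i] Xc[OF i] j])
        finally show ?thesis using rcomp[OF j] by simp
      qed
      have fFi: "\<forall>i'\<in>{1..p}. f i' ((X(i := X' i)) i') = ereal ((F(i := F' i)) i')"
        using fF fF' by auto
      have augXi: "augL d p f A b \<beta> (X(i := X' i)) l = ereal (sum (F(i := F' i)) {1..p} + (- (l \<bullet> ri) + \<beta> / 2 * (vnorm ri)\<^sup>2))"
        unfolding ri_def using augL_fin[of p f "X(i := X' i)" "F(i := F' i)"] fFi by blast
      have e: "sum (F(i := F' i)) {1..p} + (- (l \<bullet> ri) + \<beta> / 2 * (vnorm ri)\<^sup>2) + breg (w k i) (gw k i) (X i) (X' i)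
           \<le> sum F {1..p} + QQ"
        using blk0[OF i] augX augXi by simp
      have s1: "sum (F(i := F' i)) {1..p} = sum F {1..p} - F i + F' i" by (rule sum_upd) (use i in auto)
      have s2: "l \<bullet> ri = (\<Sum>j<d. l $ j * (r $ j + u i j))" using sprod_comp[OF ric] rij by simp
      have s3: "(vnorm ri)\<^sup>2 = (\<Sum>j<d. (r $ j + u i j)\<^sup>2)" using vnorm_sq[OF ric] rij by simp
      have s4: "QQ = - (\<Sum>j<d. l $ j * r $ j) + \<beta> / 2 * (\<Sum>j<d. (r $ j)\<^sup>2)"
        unfolding QQ_def using sprod_comp[OF rc] vnorm_sq[OF rc] by simp
      have s5: "(\<Sum>j<d. - l $ j * u i j + \<beta> / 2 * ((r $ j + u i j)\<^sup>2 - (r $ j)\<^sup>2))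
         = (- (\<Sum>j<d. l $ j * (r $ j + u i j)) + \<beta> / 2 * (\<Sum>j<d. (r $ j + u i j)\<^sup>2))
           - (- (\<Sum>j<d. l $ j * r $ j) + \<beta> / 2 * (\<Sum>j<d. (r $ j)\<^sup>2))"
        by (simp add: sum.distrib sum_subtractf sum_distrib_left algebra_simps)
      show "F' i - F i + (\<Sum>j<d. - l $ j * u i j + \<beta> / 2 * ((r $ j + u i j)\<^sup>2 - (r $ j)\<^sup>2)) + m i / 2 * D i \<le> 0"
        using e[unfolded s1 s2 s3 s4] s5 breg_ge[OF i] by linarith
    qed
    have nrm: "\<forall>i\<in>{1..p}. (\<Sum>j<d. (u i j)\<^sup>2) \<le> (opnorm (A i))\<^sup>2 * D i"
    proof
      fix i assume i: "i \<in> {1..p}"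
      show "(\<Sum>j<d. (u i j)\<^sup>2) \<le> (opnorm (A i))\<^sup>2 * D i"
        unfolding u_def D_def by (rule opnorm_bound_sq[OF Adim[OF i] minus_carrier_vec[OF X'c[OF i] Xc[OF i]]])
    qed
    have cr: "(\<Sum>i=1..p. F' i) - (\<Sum>i=1..p. F i)
      + (\<Sum>j<d. - l $ j * (\<Sum>i=1..p. u i j) + \<beta> / 2 * ((r $ j + (\<Sum>i=1..p. u i j))\<^sup>2 - (r $ j)\<^sup>2))
    \<le> - (\<Sum>i=1..p. m i / 2 * D i) + (\<Sum>i=1..<p. (real p - 2 + \<alpha>) * \<beta> * (opnorm (A i))\<^sup>2 / 2 * D i)
      + (real p - 1) * \<beta> * (opnorm (A p))\<^sup>2 / (2 * \<alpha>) * D p"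
      by (rule core[OF p2 alpha beta(2) blk nrm])
    define r' where "r' = resid d p A b X'"
    have r'c: "r' \<in> carrier_vec d" unfolding r'_def by (rule resid_carrier[OF b_dim])
    have r'j: "r' $ j = r $ j + (\<Sum>i=1..p. u i j)" if j: "j < d" for j
    proof -
      have "r' $ j = (\<Sum>i=1..p. (A i *\<^sub>v X' i) $ j) - b $ j"
        unfolding r'_def using resid_comp[OF b_dim j] .
      also have "(\<Sum>i=1..p. (A i *\<^sub>v X' i) $ j) = (\<Sum>i=1..p. (A i *\<^sub>v X i) $ j + u i j)"
      proof (intro sum.cong refl)
        fix i assume i: "i \<in> {1..p}"
        show "(A i *\<^sub>v X' i) $ j = (A i *\<^sub>v X i) $ j + u i j"
          unfolding u_def by (rule mv_minus[OF Adim[OF i] X'c[OF i] Xc[OF i] j])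
      qed
      finally show ?thesis using rcomp[OF j] by (simp add: sum.distrib)
    qed
    have l'eq: "l' = l - (\<theta> * \<beta>) \<cdot>\<^sub>v r'"
      unfolding l'_def l_def r'_def X'_def using lam_upd k1 km by auto
    have augX': "augL d p f A b \<beta> X' l' = ereal (sum F' {1..p} + (- (l' \<bullet> r') + \<beta> / 2 * (vnorm r')\<^sup>2))"
      unfolding r'_def by (rule augL_fin) (use fF' in auto)
    have s6: "l' \<bullet> r' = (\<Sum>j<d. l $ j * r' $ j) - \<theta> * \<beta> * (\<Sum>j<d. (r' $ j)\<^sup>2)"
      using sprod_comp[OF r'c] lc r'c unfolding l'eq
      by (simp add: sum_subtractf sum_distrib_left power2_eq_square algebra_simps)
    have s7: "(vnorm r')\<^sup>2 = (\<Sum>j<d. (r' $ j)\<^sup>2)" by (rule vnorm_sq[OF r'c])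
    have dlk: "dl k = (- (\<theta> * \<beta>)) \<cdot>\<^sub>v r'"
    proof -
      have "dl k = l' - l" unfolding dl_def l'_def l_def using km kK by simp
      also have "\<dots> = (- (\<theta> * \<beta>)) \<cdot>\<^sub>v r'" unfolding l'eq
        by (rule eq_vecI) (use lc r'c in auto)
      finally show ?thesis .
    qed
    have s8: "(vnorm (dl k))\<^sup>2 = (\<theta> * \<beta>)\<^sup>2 * (\<Sum>j<d. (r' $ j)\<^sup>2)"
      unfolding dlk using vnorm_smult[OF r'c] s7 by (simp add: power_mult_distrib)
    have dxk: "dx k i = X' i - X i" for i unfolding dx_def X'_def X_def using kK by simp
    have etak: "eta k = (\<Sum>i=1..p. m i / 4 * D i) + c1 / 2 * (vnorm (transpose_mat (A p) *\<^sub>v dl k))\<^sup>2"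
      unfolding eta_def D_def dxk using kK by simp
    have Lk: "Lhat k = ereal (sum F' {1..p} + (- (l' \<bullet> r') + \<beta> / 2 * (vnorm r')\<^sup>2) + eta k)"
      unfolding Lhat_def using augX' unfolding X'_def l'_def by simp
    have LK: "Lhat (k - 1) = ereal (sum F {1..p} + QQ + eta (k - 1))"
      unfolding Lhat_def km using augX unfolding X_def l_def by simp
    define D0 where "D0 = (vnorm (dx (k - 1) p))\<^sup>2"
    define G0 where "G0 = (vnorm (transpose_mat (A p) *\<^sub>v dl (k - 1)))\<^sup>2"
    have etaK: "eta (k - 1) \<ge> m p / 4 * D0 + c1 / 2 * G0"
    proof (cases "K = 0")
      case True
      have "0 < m p \<and> m p \<le> M p" using mM pin by blast
      hence Mp: "M p > 0" by linarith
      define R where "R = transpose_mat (A p) *\<^sub>v lam 0 - gfp (x 0 p)"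
      have dx0: "dx (k - 1) p = (1 / M p) \<cdot>\<^sub>v R" unfolding dx_def km True R_def by simp
      have "vnorm ((1 / M p) \<cdot>\<^sub>v R) = \<bar>1 / M p\<bar> * vnorm R"
        by (rule vnorm_smult[OF carrier_vecI[OF refl]])
      also have "\<bar>1 / M p\<bar> = 1 / M p" using Mp by simp
      finally have "D0 = (1 / M p * vnorm R)\<^sup>2" unfolding D0_def dx0 by simp
      hence "D0 = (1 / M p)\<^sup>2 * (vnorm R)\<^sup>2" by (simp only: power_mult_distrib)
      moreover have "G0 = 0" unfolding G0_def dl_def km True
        using vnorm_zero_mv[of "transpose_mat (A p)" "n p" d] Adim[OF pin] by simp
      moreover have "eta (k - 1) = m p / (4 * (M p)\<^sup>2) * (vnorm R)\<^sup>2" unfolding eta_def km True R_def by simp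
      ultimately show ?thesis using Mp by (simp add: power2_eq_square)
    next
      case False
      have "eta (k - 1) = (\<Sum>i=1..p. m i / 4 * (vnorm (dx K i))\<^sup>2) + c1 / 2 * G0"
        unfolding eta_def G0_def km using False by simp
      moreover have "(\<Sum>i=1..p. m i / 4 * (vnorm (dx K i))\<^sup>2) \<ge> m p / 4 * D0"
      proof -
        have "(\<Sum>i=1..p. m i / 4 * (vnorm (dx K i))\<^sup>2) = (\<Sum>i=1..<p. m i / 4 * (vnorm (dx K i))\<^sup>2) + m p / 4 * D0"
          unfolding D0_def km ins by simp
        moreover have "(\<Sum>i=1..<p. m i / 4 * (vnorm (dx K i))\<^sup>2) \<ge> 0"
          using mM by (intro sum_nonneg) (simp add: less_imp_le)
        ultimately show ?thesis by simp
      qed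
      ultimately show ?thesis by simp
    qed
    have Dnn: "D0 \<ge> 0" unfolding D0_def by simp
    have Npnn: "(real p - 1) * \<beta> * (opnorm (A p))\<^sup>2 / (2 * \<alpha>) * D0 \<ge> 0"
      using p2 beta alpha Dnn by simp
    have splitm2: "(\<Sum>i=1..p. m i / 2 * D i) = (\<Sum>i=1..<p. m i / 2 * D i) + m p / 2 * D p"
      unfolding ins by simp
    have splitm4: "(\<Sum>i=1..p. m i / 4 * D i) = (\<Sum>i=1..<p. m i / 4 * D i) + m p / 4 * D p"
      unfolding ins by simp
    have RHSe: "RHS = (\<Sum>i=1..<p. (real p - 2 + \<alpha>) * \<beta> * (opnorm (A i))\<^sup>2 / 2 * D i) - (\<Sum>i=1..<p. m i / 4 * D i)
       + (1 / (\<beta> * \<theta>) * (vnorm (dl k))\<^sup>2 + c1 / 2 * ((vnorm (transpose_mat (A p) *\<^sub>v dl k))\<^sup>2 - G0))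
       + ((real p - 1) * \<beta> * (opnorm (A p))\<^sup>2 / (2 * \<alpha>) - m p / 4) * (D p + D0)"
      unfolding RHS_def Theta_lam_def Theta_p_def G0_def D0_def D_def dxk
      by (simp add: sum_subtractf[symmetric] algebra_simps)
    have s9: "1 / (\<beta> * \<theta>) * (vnorm (dl k))\<^sup>2 = \<theta> * \<beta> * (\<Sum>j<d. (r' $ j)\<^sup>2)"
      unfolding s8 using beta theta by (simp add: power2_eq_square field_simps)
    have s10: "(\<Sum>j<d. - l $ j * (\<Sum>i=1..p. u i j) + \<beta> / 2 * ((r $ j + (\<Sum>i=1..p. u i j))\<^sup>2 - (r $ j)\<^sup>2))
       = (- (\<Sum>j<d. l $ j * r' $ j) + \<beta> / 2 * (\<Sum>j<d. (r' $ j)\<^sup>2))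
         - (- (\<Sum>j<d. l $ j * r $ j) + \<beta> / 2 * (\<Sum>j<d. (r $ j)\<^sup>2))"
    proof -
      have "(\<Sum>j<d. - l $ j * (\<Sum>i=1..p. u i j) + \<beta> / 2 * ((r $ j + (\<Sum>i=1..p. u i j))\<^sup>2 - (r $ j)\<^sup>2))
         = (\<Sum>j<d. (- (l $ j * r' $ j) + \<beta> / 2 * (r' $ j)\<^sup>2) - (- (l $ j * r $ j) + \<beta> / 2 * (r $ j)\<^sup>2))"
        using r'j by (intro sum.cong refl) (simp add: algebra_simps)
      thus ?thesis by (simp add: sum_subtractf sum.distrib sum_negf sum_distrib_left)
    qed
    have s4: "QQ = - (\<Sum>j<d. l $ j * r $ j) + \<beta> / 2 * (\<Sum>j<d. (r $ j)\<^sup>2)"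
      unfolding QQ_def using sprod_comp[OF rc] vnorm_sq[OF rc] by simp
    have real_ineq: "sum F' {1..p} + (- (l' \<bullet> r') + \<beta> / 2 * (vnorm r')\<^sup>2) + eta k
        \<le> sum F {1..p} + QQ + eta (k - 1) + RHS"
    proof -
      have RHSe2: "RHS = (\<Sum>i=1..<p. (real p - 2 + \<alpha>) * \<beta> * (opnorm (A i))\<^sup>2 / 2 * D i) - (\<Sum>i=1..<p. m i / 4 * D i)
         + 1 / (\<beta> * \<theta>) * (vnorm (dl k))\<^sup>2 + c1 / 2 * (vnorm (transpose_mat (A p) *\<^sub>v dl k))\<^sup>2 - c1 / 2 * G0
         + (real p - 1) * \<beta> * (opnorm (A p))\<^sup>2 / (2 * \<alpha>) * D p - m p / 4 * D p
         + (real p - 1) * \<beta> * (opnorm (A p))\<^sup>2 / (2 * \<alpha>) * D0 - m p / 4 * D0"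
        unfolding RHSe using alpha by (simp add: field_simps)
      have h2: "(\<Sum>i=1..<p. m i / 2 * D i) = 2 * (\<Sum>i=1..<p. m i / 4 * D i)"
        unfolding sum_distrib_left by (intro sum.cong refl) simp
      have h3: "m p / 2 * D p = 2 * (m p / 4 * D p)" by simp
      show ?thesis unfolding s6 s7
        using cr s4 s9 s10 etak etaK Npnn splitm2 splitm4 RHSe2 h2 h3 by linarith
    qed
    show ?thesis unfolding Lk LK using real_ineq by simp
  qed
  show ?thesis unfolding Let_def
    using main unfolding c1_def dx_def dl_def eta_def Lhat_def Theta_lam_def Theta_p_def RHS_def .
qed

end
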